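(* Assume $\hat\omega$ lies in the interior of $\mathbb{P}_\Omega$ (all $\hat\omega_i>0$). The vertex-direction iteration with step sizes $\alpha_n=1/(n+1)$, initialized at any $\omega^{(1)}\in\mathbb{P}_\Omega$, satisfies $$\|\omega^{(n)}-\hat\omega\|_{\mathbf K}^2\le 4R_*^2\Big(1+\frac{R_*^2}{\alpha_*^2}\Big)\frac1{n^2},\qquad n\ge1,$$ where $R_*=[\lambda_{\max}(\mathbf K)(1-1/\Omega)]^{1/2}$, $\alpha_*=w_*/L$, $w_*=\min_i\hat\omega_i$ and $L=(\max_i\{\mathbf K^{-1}\}_{ii})^{1/2}$.
   Context: $\mathbf K$ is a real symmetric positive definite $\Omega\times\Omega$ matrix ($\Omega\ge2$) with largest eigenvalue $\lambda_{\max}(\mathbf K)$; $\|u\|_{\mathbf K}^2=u^T\mathbf K u$. $e_i$ is the $i$-th canonical basis vector of $\mathbb{R}^\Omega$ and $\mathbb{P}_\Omega=\{\omega\in\mathbb{R}^\Omega:\omega_i\ge0,\sum_i\omega_i=1\}$. The vertex-direction iteration is $\omega^{(n+1)}=\omega^{(n)}+\alpha_n(e_{i_n^+}-\omega^{(n)})$ with $i_n^+\in\arg\min_{i=1,\dots,\Omega}e_i^T\mathbf K(\omega^{(n)}-\hat\omega)$. *)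

theory Defs
  imports "HOL-Analysis.Analysis"
begin

definition matrix_eigenvalues :: "real^'n^'n \<Rightarrow> real set" where
  "matrix_eigenvalues K = {l. \<exists>v. v \<noteq> 0 \<and> K *v v = l *\<^sub>R v}"

definition lambda_max :: "real^'n^'n \<Rightarrow> real" where
  "lambda_max K = Max (matrix_eigenvalues K)"

definition simplex_P :: "(real^'n) set" where
  "simplex_P = {w. (\<forall>i. w $ i \<ge> 0) \<and> sum (\<lambda>i. w $ i) UNIV = 1}"

definition Knorm2 :: "real^'n^'n \<Rightarrow> real^'n \<Rightarrow> real" where
  "Knorm2 K u = u \<bullet> (K *v u)"

end

theory Submission imports Defs begin

lemma sym_dot:
  fixes K :: "real^'n^'n"
  assumes "transpose K = K"
  shows "x \<bullet> (K *v y) = y \<bullet> (K *v x)"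
proof -
  have "x \<bullet> (K *v y) = (x v* K) \<bullet> y" by (simp add: dot_lmul_matrix)
  also have "x v* K = transpose K *v x" by simp
  finally show ?thesis using assms by (simp add: inner_commute)
qed

lemma kexpand:
  fixes K :: "real^'n^'n"
  assumes "transpose K = K"
  shows "(x + y) \<bullet> (K *v (x + y)) = x \<bullet> (K *v x) + 2 * (y \<bullet> (K *v x)) + y \<bullet> (K *v y)"
  using sym_dot[OF assms, of x y]
  by (simp add: matrix_vector_right_distrib inner_add_left inner_add_right)

lemma kscale:
  fixes K :: "real^'n^'n"
  shows "(c *\<^sub>R x) \<bullet> (K *v (c *\<^sub>R x)) = c^2 * (x \<bullet> (K *v x))"
  by (simp add: matrix_vector_mult_scaleR power2_eq_square)

lemma kcs:
  fixes K :: "real^'n^'n"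
  assumes sym: "transpose K = K"
    and pd: "\<forall>x. x \<noteq> 0 \<longrightarrow> x \<bullet> (K *v x) > 0"
  shows "(x \<bullet> (K *v y))^2 \<le> (x \<bullet> (K *v x)) * (y \<bullet> (K *v y))"
proof (cases "y = 0")
  case True then show ?thesis by simp
next
  case False
  define a where "a = x \<bullet> (K *v x)"
  define b where "b = x \<bullet> (K *v y)"
  define c where "c = y \<bullet> (K *v y)"
  have c: "c > 0" using pd False c_def by auto
  have psd: "\<forall>z. z \<bullet> (K *v z) \<ge> 0" using pd by (metis inner_zero_left less_eq_real_def)
  define t where "t = - b / c"
  have "0 \<le> (x + t *\<^sub>R y) \<bullet> (K *v (x + t *\<^sub>R y))" using psd by blast
  also have "\<dots> = a + 2 * t * b + t^2 * c"
    using kexpand[OF sym, of x "t *\<^sub>R y"] kscale[of t y K] sym_dot[OF sym, of x y]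
    by (simp add: a_def b_def c_def matrix_vector_mult_scaleR)
  also have "\<dots> = a - b^2 / c" using c by (simp add: t_def field_simps power2_eq_square)
  finally have "b^2 \<le> a * c" using c by (simp add: field_simps)
  then show ?thesis by (simp add: a_def b_def c_def)
qed

lemma simplex_le1:
  assumes "x \<in> simplex_P" shows "x $ i \<le> 1" "x $ i \<ge> 0"
proof -
  have "x $ i \<le> sum (\<lambda>j. x $ j) UNIV"
    by (rule member_le_sum) (use assms in \<open>auto simp: simplex_P_def\<close>)
  then show "x $ i \<le> 1" using assms by (simp add: simplex_P_def)
  show "x $ i \<ge> 0" using assms by (simp add: simplex_P_def)
qed

lemma simplex_dist:
  fixes x y :: "real^'n"
  assumes "x \<in> simplex_P" "y \<in> simplex_P"
  shows "(x - y) \<bullet> (x - y) \<le> 2"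
proof -
  have "(x - y) \<bullet> (x - y) = (\<Sum>i\<in>UNIV. (x$i - y$i)^2)"
    by (simp add: inner_vec_def power2_eq_square)
  also have "\<dots> \<le> (\<Sum>i\<in>UNIV. x$i + y$i)"
  proof (rule sum_mono)
    fix i
    have "x$i \<le> 1" "x$i \<ge> 0" "y$i \<le> 1" "y$i \<ge> 0" using simplex_le1 assms by auto
    then show "(x$i - y$i)^2 \<le> x$i + y$i"
    proof -
      have "x$i * x$i \<le> x$i" "y$i * y$i \<le> y$i" "x$i * y$i \<ge> 0"
        using \<open>x$i \<le> 1\<close> \<open>x$i \<ge> 0\<close> \<open>y$i \<le> 1\<close> \<open>y$i \<ge> 0\<close>
        by (auto simp: mult_left_le)
      then show ?thesis by (simp add: power2_eq_square algebra_simps)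
    qed
  qed
  also have "\<dots> = 2" using assms by (simp add: sum.distrib simplex_P_def)
  finally show ?thesis .
qed

lemma axis_simplex: "axis i (1::real) \<in> simplex_P"
  by (simp add: simplex_P_def axis_def)


lemma eig_finite:
  fixes K :: "real^'n^'n"
  assumes sym: "transpose K = K"
  shows "finite (matrix_eigenvalues K)"
proof -
  define E where "E = matrix_eigenvalues K"
  define v where "v l = (SOME v. v \<noteq> 0 \<and> K *v v = l *\<^sub>R v)" for l
  have v: "v l \<noteq> 0 \<and> K *v v l = l *\<^sub>R v l" if "l \<in> E" for l
  proof -
    have "\<exists>w. w \<noteq> 0 \<and> K *v w = l *\<^sub>R w" using that by (simp add: E_def matrix_eigenvalues_def)
    then show ?thesis unfolding v_def by (rule someI_ex)
  qed
  have inj: "inj_on v E"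
  proof (rule inj_onI)
    fix l l' assume "l \<in> E" "l' \<in> E" "v l = v l'"
    then have "l *\<^sub>R v l = l' *\<^sub>R v l" "v l \<noteq> 0" using v by metis+
    then show "l = l'" by (metis scaleR_cancel_right)
  qed
  have orth: "pairwise orthogonal (v ` E)"
  proof (clarsimp simp: pairwise_def)
    fix l l' assume l: "l \<in> E" "l' \<in> E" "v l \<noteq> v l'"
    then have ne: "l \<noteq> l'" by auto
    have "l * (v l \<bullet> v l') = (K *v v l) \<bullet> v l'" using v[OF l(1)] by simp
    also have "\<dots> = v l' \<bullet> (K *v v l)" by (simp add: inner_commute)
    also have "\<dots> = v l \<bullet> (K *v v l')" using sym_dot[OF sym] by metis
    also have "\<dots> = l' * (v l \<bullet> v l')" using v[OF l(2)] by simp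
    finally have "(l - l') * (v l \<bullet> v l') = 0" by (simp add: algebra_simps)
    then show "orthogonal (v l) (v l')" using ne by (simp add: orthogonal_def)
  qed
  have "0 \<notin> v ` E" using v by auto
  then have "independent (v ` E)" using orth pairwise_orthogonal_independent by blast
  then have "finite (v ` E)" using independent_bound by blast
  then show ?thesis using inj finite_imageD E_def by blast
qed

lemma rayleigh:
  fixes K :: "real^'n^'n"
  assumes sym: "transpose K = K"
    and pd: "\<forall>x. x \<noteq> 0 \<longrightarrow> x \<bullet> (K *v x) > 0"
  shows "lambda_max K > 0 \<and> (\<forall>x. x \<bullet> (K *v x) \<le> lambda_max K * (x \<bullet> x))"
proof -
  define f where "f x = x \<bullet> (K *v x)" for x :: "real^'n"
  have cont: "continuous_on (sphere 0 1) f"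
  proof -
    have "bounded_linear ((*v) K)" using matrix_vector_mul_linear[of K]
      by (simp add: linear_conv_bounded_linear)
    then have "continuous_on (sphere 0 1) ((*v) K)" by (rule linear_continuous_on)
    then show ?thesis unfolding f_def by (intro continuous_intros)
  qed
  have ne: "sphere (0::real^'n) 1 \<noteq> {}" by simp
  obtain u where u: "u \<in> sphere 0 1" and umax: "\<And>x. x \<in> sphere 0 1 \<Longrightarrow> f x \<le> f u"
    using continuous_attains_sup[OF compact_sphere ne cont] by blast
  define \<mu> where "\<mu> = f u"
  have unz: "u \<noteq> 0" using u by auto
  have rq: "f x \<le> \<mu> * (x \<bullet> x)" for x
  proof (cases "x = 0")
    case True then show ?thesis by (simp add: f_def)
  next
    case False
    define c where "c = 1 / norm x"
    have "c *\<^sub>R x \<in> sphere 0 1" using False by (simp add: c_def)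
    then have "f (c *\<^sub>R x) \<le> \<mu>" using umax \<mu>_def by blast
    then have "c^2 * f x \<le> \<mu>" unfolding f_def kscale by simp
    moreover have "c^2 * (x \<bullet> x) = 1" using False
      by (simp add: c_def power2_norm_eq_inner[symmetric] field_simps)
    ultimately have h: "c^2 * f x \<le> \<mu>" "c^2 * (x \<bullet> x) = 1" by auto
    have "(x \<bullet> x) * (c^2 * f x) = (c^2 * (x \<bullet> x)) * f x" by (simp only: ac_simps)
    then have "f x = (x \<bullet> x) * (c^2 * f x)" using h(2) by simp
    also have "\<dots> \<le> (x \<bullet> x) * \<mu>" using h(1) by (intro mult_left_mono) auto
    finally show ?thesis by (simp add: mult.commute)
  qed
  define M where "M x = \<mu> *\<^sub>R x - K *v x" for x :: "real^'n"
  have qM: "x \<bullet> M x \<ge> 0" for x using rq[of x] by (simp add: M_def f_def inner_diff_right)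
  have Msym: "x \<bullet> M y = y \<bullet> M x" for x y
    using sym_dot[OF sym, of x y] by (simp add: M_def inner_diff_right inner_commute)
  have Mlin: "M (x + t *\<^sub>R y) = M x + t *\<^sub>R M y" for x y t
    by (simp add: M_def matrix_vector_right_distrib matrix_vector_mult_scaleR algebra_simps)
  have uu: "u \<bullet> u = 1" using u by (simp add: dot_square_norm)
  have qu: "u \<bullet> M u = 0" using uu by (simp add: M_def \<mu>_def f_def inner_diff_right)
  define y where "y = M u"
  define b where "b = y \<bullet> M u"
  define c where "c = y \<bullet> M y"
  have c0: "c \<ge> 0" using qM c_def by simp
  have b0: "b = 0"
  proof (rule ccontr)
    assume bnz: "b \<noteq> 0"
    define t where "t = - b / (c + 1)"
    have "0 \<le> (u + t *\<^sub>R y) \<bullet> M (u + t *\<^sub>R y)" by (rule qM)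
    also have "\<dots> = 2 * t * b + t^2 * c"
      using Msym[of u y] qu
      by (simp add: Mlin inner_add_left inner_add_right b_def c_def power2_eq_square algebra_simps)
    also have "\<dots> = b^2 * (- c - 2) / (c + 1)^2" using c0
      apply (simp add: t_def power2_eq_square)
      apply (simp add: divide_simps)
      by (simp add: algebra_simps)
    also have "\<dots> < 0" using bnz c0
      by (intro divide_neg_pos mult_pos_neg) auto
    finally show False by simp
  qed
  then have "M u = 0" by (simp add: b_def y_def)
  then have Ku: "K *v u = \<mu> *\<^sub>R u" by (simp add: M_def)
  then have mem: "\<mu> \<in> matrix_eigenvalues K" using unz by (auto simp: matrix_eigenvalues_def)
  have "\<mu> \<le> lambda_max K" unfolding lambda_max_def
    by (rule Max_ge[OF eig_finite[OF sym] mem])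
  moreover have "\<mu> > 0" using pd unz by (simp add: \<mu>_def f_def)
  ultimately show ?thesis using rq unfolding f_def
    by (meson inner_ge_zero mult_right_mono order_trans less_le_trans)
qed


lemma Kinv:
  fixes K :: "real^'n^'n"
  assumes pd: "\<forall>x. x \<noteq> 0 \<longrightarrow> x \<bullet> (K *v x) > 0"
  shows "K ** matrix_inv K = mat 1"
proof -
  have "\<forall>x. K *v x = 0 \<longrightarrow> x = 0" using pd by (metis inner_zero_right less_irrefl)
  then obtain B where "B ** K = mat 1" using matrix_left_invertible_ker by blast
  then have "invertible K" using invertible_left_inverse by blast
  then have "\<exists>A'. K ** A' = mat 1 \<and> A' ** K = mat 1" by (simp add: invertible_def)
  then have "K ** matrix_inv K = mat 1 \<and> matrix_inv K ** K = mat 1"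
    unfolding matrix_inv_def by (rule someI_ex)
  then show ?thesis by simp
qed

lemma compL:
  fixes K :: "real^'n^'n"
  assumes sym: "transpose K = K"
    and pd: "\<forall>x. x \<noteq> 0 \<longrightarrow> x \<bullet> (K *v x) > 0"
  shows "sqrt (Max (range (\<lambda>i. matrix_inv K $ i $ i))) > 0
     \<and> (\<forall>j. \<bar>D $ j\<bar> \<le> sqrt (Max (range (\<lambda>i. matrix_inv K $ i $ i))) * sqrt (D \<bullet> (K *v D)))"
proof -
  define Q where "Q = matrix_inv K"
  define Mx where "Mx = Max (range (\<lambda>i. Q $ i $ i))"
  have KQ: "K ** Q = mat 1" using Kinv[OF pd] Q_def by simp
  define v where "v j = Q *v axis j 1" for j
  have Kv: "K *v v j = axis j 1" for j
    by (simp add: v_def matrix_vector_mul_assoc KQ)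
  have vKv: "v j \<bullet> (K *v v j) = Q $ j $ j" for j
  proof -
    have "v j \<bullet> (K *v v j) = v j \<bullet> axis j 1" by (simp only: Kv)
    also have "\<dots> = v j $ j" by (simp add: inner_axis)
    also have "\<dots> = Q $ j $ j" by (simp add: v_def matrix_vector_mult_basis column_def)
    finally show ?thesis .
  qed
  have vnz: "v j \<noteq> 0" for j using Kv[of j] by (metis axis_eq_0_iff matrix_vector_mult_0_right zero_neq_one)
  have Qpos: "Q $ j $ j > 0" for j using pd vnz vKv by metis
  have QM: "Q $ j $ j \<le> Mx" for j unfolding Mx_def by (rule Max_ge) auto
  have Mpos: "Mx > 0" using Qpos QM by (meson less_le_trans)
  have "\<bar>D $ j\<bar> \<le> sqrt Mx * sqrt (D \<bullet> (K *v D))" for j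
  proof -
    have "D $ j = axis j 1 \<bullet> D" by (simp add: inner_axis')
    also have "\<dots> = D \<bullet> (K *v v j)" by (simp add: Kv inner_commute)
    also have "\<dots> = v j \<bullet> (K *v D)" using sym_dot[OF sym] by metis
    finally have "(D $ j)^2 \<le> Q $ j $ j * (D \<bullet> (K *v D))"
      using kcs[OF sym pd, of "v j" D] vKv by simp
    also have "\<dots> \<le> Mx * (D \<bullet> (K *v D))"
      using QM pd by (intro mult_right_mono) (auto, metis inner_zero_left less_eq_real_def)
    finally have "sqrt ((D $ j)^2) \<le> sqrt (Mx * (D \<bullet> (K *v D)))" by (rule real_sqrt_le_mono)
    then show ?thesis by (simp add: real_sqrt_mult)
  qed
  then show ?thesis using Mpos by (simp add: Q_def Mx_def)
qed


lemma descent: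
  fixes K :: "real^'n^'n" and what D :: "real^'n"
  assumes sym: "transpose K = K"
    and pd: "\<forall>x. x \<noteq> 0 \<longrightarrow> x \<bullet> (K *v x) > 0"
    and ws: "what \<in> simplex_P"
    and wi: "\<forall>i. what $ i > 0"
    and sD: "sum (\<lambda>j. D $ j) UNIV = 0"
    and imin: "\<forall>j. (K *v D) $ i \<le> (K *v D) $ j"
  shows "(axis i 1 - what) \<bullet> (K *v D) \<le>
     - (Min (range (\<lambda>i. what $ i)) / sqrt (Max (range (\<lambda>i. matrix_inv K $ i $ i)))) * sqrt (D \<bullet> (K *v D))"
proof -
  define L where "L = sqrt (Max (range (\<lambda>i. matrix_inv K $ i $ i)))"
  define w where "w = Min (range (\<lambda>i. what $ i))"
  define g where "g = K *v D"
  define m where "m = g $ i"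
  define E where "E = D \<bullet> g"
  define s where "s = (\<Sum>j\<in>UNIV. g $ j - m)"
  have Lp: "L > 0" and Dj: "\<And>j. \<bar>D $ j\<bar> \<le> L * sqrt E"
    using compL[OF sym pd, of D] by (auto simp: L_def E_def g_def)
  have gm: "g $ j - m \<ge> 0" for j using imin by (simp add: g_def m_def)
  have s0: "s \<ge> 0" unfolding s_def using gm by (simp add: sum_nonneg)
  have wle: "w \<le> what $ j" for j unfolding w_def by (rule Min_le) auto
  have sw: "sum (\<lambda>j. what $ j) UNIV = 1" using ws by (simp add: simplex_P_def)
  have "(axis i 1 - what) \<bullet> g = m - (\<Sum>j\<in>UNIV. what $ j * g $ j)"
  proof -
    have "what \<bullet> g = (\<Sum>j\<in>UNIV. what $ j * g $ j)" by (simp add: inner_vec_def)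
    then show ?thesis by (simp add: inner_diff_left inner_axis' m_def)
  qed
  also have "(\<Sum>j\<in>UNIV. what $ j * g $ j) = (\<Sum>j\<in>UNIV. what $ j * (g $ j - m)) + m"
    using sw by (simp add: algebra_simps sum.distrib sum_subtractf sum_distrib_left[symmetric])
  finally have cross: "(axis i 1 - what) \<bullet> g = - (\<Sum>j\<in>UNIV. what $ j * (g $ j - m))" by simp
  have "w * s = (\<Sum>j\<in>UNIV. w * (g $ j - m))" by (simp add: s_def sum_distrib_left)
  also have "\<dots> \<le> (\<Sum>j\<in>UNIV. what $ j * (g $ j - m))"
    by (rule sum_mono) (use wle gm in \<open>auto intro: mult_right_mono\<close>)
  finally have ws_le: "w * s \<le> (\<Sum>j\<in>UNIV. what $ j * (g $ j - m))" .
  have "E = (\<Sum>j\<in>UNIV. D $ j * g $ j)" by (simp add: E_def inner_vec_def)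
  also have "\<dots> = (\<Sum>j\<in>UNIV. D $ j * (g $ j - m))"
    using sD by (simp add: algebra_simps sum_subtractf sum_distrib_right[symmetric] sum_distrib_left[symmetric])
  also have "\<dots> \<le> (\<Sum>j\<in>UNIV. (L * sqrt E) * (g $ j - m))"
  proof (rule sum_mono)
    fix j
    have "D $ j * (g $ j - m) \<le> \<bar>D $ j\<bar> * (g $ j - m)" using gm[of j]
      by (intro mult_right_mono) auto
    also have "\<dots> \<le> (L * sqrt E) * (g $ j - m)" using gm[of j] Dj[of j]
      by (intro mult_right_mono) auto
    finally show "D $ j * (g $ j - m) \<le> (L * sqrt E) * (g $ j - m)" .
  qed
  also have "\<dots> = L * sqrt E * s" by (simp add: s_def sum_distrib_left)
  finally have Ele: "E \<le> L * sqrt E * s" .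
  have E0: "E \<ge> 0" using pd unfolding E_def g_def by (metis inner_zero_left less_eq_real_def)
  have key: "sqrt E \<le> L * s"
  proof (cases "sqrt E = 0")
    case True then show ?thesis using Lp s0 by simp
  next
    case False
    then have pos: "sqrt E > 0" using E0 by simp
    have e1: "sqrt E * sqrt E = E" using E0 by simp
    have e2: "L * sqrt E * s = sqrt E * (L * s)" by (simp only: ac_simps)
    have "sqrt E * sqrt E \<le> sqrt E * (L * s)" using Ele e1 e2 by linarith
    then show ?thesis using pos mult_le_cancel_left_pos by blast
  qed
  have "w \<in> range (\<lambda>i. what $ i)" unfolding w_def by (rule Min_in) auto
  then have w0: "w \<ge> 0" using wi by (auto intro: less_imp_le)
  have "(w / L) * sqrt E \<le> (w / L) * (L * s)" using key w0 Lp by (intro mult_left_mono) auto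
  also have "\<dots> = w * s" using Lp by simp
  finally have "(w / L) * sqrt E \<le> (\<Sum>j\<in>UNIV. what $ j * (g $ j - m))" using ws_le by linarith
  then show ?thesis using cross by (simp add: L_def w_def E_def g_def)
qed


theorem lemmaA3:
  fixes K :: "real^'n^'n" and what :: "real^'n" and \<omega> :: "nat \<Rightarrow> real^'n"
  assumes card: "CARD('n) \<ge> 2"
    and sym: "transpose K = K"
    and posdef: "\<forall>x. x \<noteq> 0 \<longrightarrow> x \<bullet> (K *v x) > 0"
    and what_simplex: "what \<in> simplex_P"
    and what_interior: "\<forall>i. what $ i > 0"
    and init: "\<omega> 1 \<in> simplex_P"
    and iter: "\<forall>n\<ge>1. \<exists>i. (\<forall>j. (K *v (\<omega> n - what)) $ i \<le> (K *v (\<omega> n - what)) $ j)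
                 \<and> \<omega> (Suc n) = \<omega> n + (1 / (real n + 1)) *\<^sub>R (axis i 1 - \<omega> n)"
  shows "\<forall>n\<ge>1.
    (let Rs = sqrt (lambda_max K * (1 - 1 / real CARD('n)));
         ws = Min (range (\<lambda>i. what $ i));
         L = sqrt (Max (range (\<lambda>i. matrix_inv K $ i $ i)));
         as = ws / L
     in Knorm2 K (\<omega> n - what) \<le> 4 * Rs\<^sup>2 * (1 + Rs\<^sup>2 / as\<^sup>2) * (1 / (real n)\<^sup>2))"
proof -
  define \<Lambda> where "\<Lambda> = lambda_max K"
  have \<Lambda>pos: "\<Lambda> > 0" and ray: "\<And>x. x \<bullet> (K *v x) \<le> \<Lambda> * (x \<bullet> x)"
    using rayleigh[OF sym posdef] by (auto simp: \<Lambda>_def)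
  define w where "w = Min (range (\<lambda>i. what $ i))"
  define L where "L = sqrt (Max (range (\<lambda>i. matrix_inv K $ i $ i)))"
  define \<alpha> where "\<alpha> = w / L"
  have "w \<in> range (\<lambda>i. what $ i)" unfolding w_def by (rule Min_in) auto
  then have wpos: "w > 0" using what_interior by auto
  have Lpos: "L > 0" using compL[OF sym posdef] by (simp add: L_def)
  have apos: "\<alpha> > 0" using wpos Lpos by (simp add: \<alpha>_def)
  define M where "M = 2 * \<Lambda> + \<Lambda>^2 / \<alpha>^2"
  define D where "D n = real n *\<^sub>R (\<omega> n - what)" for n
  define E where "E n = D n \<bullet> (K *v D n)" for n
  have psd: "x \<bullet> (K *v x) \<ge> 0" for x using posdef by (metis inner_zero_left less_eq_real_def)
  have sw: "sum (\<lambda>j. what $ j) UNIV = 1" using what_simplex by (simp add: simplex_P_def)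
  have main: "\<omega> n \<in> simplex_P \<and> E n \<le> M" if "n \<ge> 1" for n
    using that
  proof (induction n rule: nat_induct_at_least)
    case base
    have "E 1 = (\<omega> 1 - what) \<bullet> (K *v (\<omega> 1 - what))" by (simp add: E_def D_def)
    also have "\<dots> \<le> \<Lambda> * ((\<omega> 1 - what) \<bullet> (\<omega> 1 - what))" by (rule ray)
    also have "\<dots> \<le> \<Lambda> * 2" using simplex_dist[OF init what_simplex] \<Lambda>pos
      by (intro mult_left_mono) auto
    also have "\<dots> \<le> M" by (simp add: M_def)
    finally show ?case using init by simp
  next
    case (Suc n)
    then have IH: "\<omega> n \<in> simplex_P" "E n \<le> M" by auto
    obtain i where imin: "\<forall>j. (K *v (\<omega> n - what)) $ i \<le> (K *v (\<omega> n - what)) $ j"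
      and upd: "\<omega> (Suc n) = \<omega> n + (1 / (real n + 1)) *\<^sub>R (axis i 1 - \<omega> n)"
      using iter Suc.hyps by blast
    define t where "t = 1 / (real n + 1)"
    have t01: "0 \<le> t" "t \<le> 1" by (auto simp: t_def)
    have comp: "\<omega> (Suc n) $ j = (1 - t) * \<omega> n $ j + t * axis i 1 $ j" for j
      by (simp add: upd t_def algebra_simps)
    have simp1: "\<omega> (Suc n) \<in> simplex_P"
    proof -
      have "\<omega> (Suc n) $ j \<ge> 0" for j
        using comp[of j] t01 simplex_le1(2)[OF IH(1), of j] simplex_le1(2)[OF axis_simplex, of i j]
        by simp
      moreover have "sum (\<lambda>j. \<omega> (Suc n) $ j) UNIV = 1"
        using IH(1) axis_simplex[of i]
        by (simp add: comp sum.distrib sum_distrib_left[symmetric] simplex_P_def)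
      ultimately show ?thesis by (simp add: simplex_P_def)
    qed
    have Dsuc: "D (Suc n) = D n + (axis i 1 - what)"
    proof -
      have ht: "(real n + 1) * t = 1" by (simp add: t_def)
      have "D (Suc n) $ j = (D n + (axis i 1 - what)) $ j" for j
      proof -
        have "D (Suc n) $ j = (real n + 1) * (\<omega> n $ j + t * (axis i 1 $ j - \<omega> n $ j) - what $ j)"
          by (simp add: D_def upd t_def)
        also have "\<dots> = (real n + 1) * (\<omega> n $ j - what $ j) + ((real n + 1) * t) * (axis i 1 $ j - \<omega> n $ j)"
          by (simp add: algebra_simps)
        also have "\<dots> = (D n + (axis i 1 - what)) $ j" unfolding ht by (simp add: D_def algebra_simps)
        finally show ?thesis .
      qed
      then show ?thesis by (simp add: vec_eq_iff)
    qed
    have sD: "sum (\<lambda>j. D n $ j) UNIV = 0"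
      using IH(1) sw by (simp add: D_def sum_distrib_left[symmetric] sum_subtractf simplex_P_def)
    have iminD: "\<forall>j. (K *v D n) $ i \<le> (K *v D n) $ j"
      using imin by (auto simp: D_def matrix_vector_mult_scaleR intro: mult_left_mono)
    have cross: "(axis i 1 - what) \<bullet> (K *v D n) \<le> - \<alpha> * sqrt (E n)"
      using descent[OF sym posdef what_simplex what_interior sD iminD]
      by (simp add: \<alpha>_def w_def L_def E_def)
    have last: "(axis i 1 - what) \<bullet> (K *v (axis i 1 - what)) \<le> 2 * \<Lambda>"
    proof -
      have "(axis i 1 - what) \<bullet> (K *v (axis i 1 - what)) \<le> \<Lambda> * ((axis i 1 - what) \<bullet> (axis i 1 - what))"
        by (rule ray)
      also have "\<dots> \<le> \<Lambda> * 2" using simplex_dist[OF axis_simplex what_simplex] \<Lambda>pos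
        by (intro mult_left_mono) auto
      finally show ?thesis by simp
    qed
    have En: "E (Suc n) \<le> E n - 2 * \<alpha> * sqrt (E n) + 2 * \<Lambda>"
      using kexpand[OF sym, of "D n" "axis i 1 - what"] cross last
      unfolding E_def Dsuc by linarith
    have E0: "E n \<ge> 0" using psd by (simp add: E_def)
    have "E (Suc n) \<le> M"
    proof (cases "sqrt (E n) \<ge> \<Lambda> / \<alpha>")
      case True
      then have "\<alpha> * sqrt (E n) \<ge> \<Lambda>" using apos by (simp add: field_simps)
      then show ?thesis using En IH(2) by linarith
    next
      case False
      then have s: "sqrt (E n) < \<Lambda> / \<alpha>" by simp
      have "sqrt (E n) ^ 2 < (\<Lambda> / \<alpha>) ^ 2"
        using s E0 by (intro power_strict_mono) auto
      then have "E n < \<Lambda>^2 / \<alpha>^2" using E0 by (simp add: power_divide)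
      moreover have "\<alpha> * sqrt (E n) \<ge> 0" using apos E0 by simp
      ultimately show ?thesis using En by (simp add: M_def)
    qed
    then show ?case using simp1 by simp
  qed
  have Mle: "M \<le> 4 * (sqrt (\<Lambda> * (1 - 1 / real CARD('n))))\<^sup>2 *
                 (1 + (sqrt (\<Lambda> * (1 - 1 / real CARD('n))))\<^sup>2 / \<alpha>\<^sup>2)"
  proof -
    define r where "r = \<Lambda> * (1 - 1 / real CARD('n))"
    have c2: "real CARD('n) \<ge> 2" using card by simp
    have "1 / real CARD('n) \<le> 1 / 2" using c2 by (simp add: field_simps)
    then have h: "1 / 2 \<le> 1 - 1 / real CARD('n)" by linarith
    have "\<Lambda> * (1 / 2) \<le> \<Lambda> * (1 - 1 / real CARD('n))"
      using mult_left_mono[OF h, of \<Lambda>] \<Lambda>pos by simp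
    then have rge: "r \<ge> \<Lambda> / 2" unfolding r_def by simp
    then have r0: "r \<ge> 0" using \<Lambda>pos by simp
    have sq: "(sqrt r)^2 = r" using r0 by simp
    have "\<Lambda>^2 \<le> (2 * r)^2" using rge \<Lambda>pos by (intro power_mono) auto
    then have "\<Lambda>^2 / \<alpha>^2 \<le> 4 * r^2 / \<alpha>^2" using apos
      by (intro divide_right_mono) (auto simp: power_mult_distrib)
    moreover have "4 * r * (1 + r / \<alpha>^2) = 4 * r + 4 * r^2 / \<alpha>^2" using apos
      by (simp add: field_simps power2_eq_square)
    ultimately show ?thesis unfolding M_def sq r_def[symmetric] using rge by linarith
  qed
  show ?thesis
  proof (intro allI impI)
    fix n :: nat assume n1: "n \<ge> 1"
    have npos: "real n > 0" using n1 by simp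
    have "E n = (real n)^2 * Knorm2 K (\<omega> n - what)"
      unfolding E_def D_def Knorm2_def kscale by simp
    then have "Knorm2 K (\<omega> n - what) = E n * (1 / (real n)^2)" using npos by (simp add: field_simps)
    also have "\<dots> \<le> M * (1 / (real n)^2)" using main[OF n1] by (intro mult_right_mono) auto
    finally have "Knorm2 K (\<omega> n - what) \<le> M * (1 / (real n)^2)" .
    also have "\<dots> \<le> 4 * (sqrt (\<Lambda> * (1 - 1 / real CARD('n))))\<^sup>2 *
                 (1 + (sqrt (\<Lambda> * (1 - 1 / real CARD('n))))\<^sup>2 / \<alpha>\<^sup>2) * (1 / (real n)^2)"
      using Mle by (intro mult_right_mono) auto
    finally show "let Rs = sqrt (lambda_max K * (1 - 1 / real CARD('n)));
         ws = Min (range (\<lambda>i. what $ i));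
         L = sqrt (Max (range (\<lambda>i. matrix_inv K $ i $ i)));
         as = ws / L
     in Knorm2 K (\<omega> n - what) \<le> 4 * Rs\<^sup>2 * (1 + Rs\<^sup>2 / as\<^sup>2) * (1 / (real n)\<^sup>2)"
      unfolding Let_def \<Lambda>_def[symmetric] w_def[symmetric] L_def[symmetric] \<alpha>_def[symmetric] .
  qed
qed

end
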